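(* Consider the single-hop VAoI system described in the context, operated under the threshold policy with threshold $\Delta_T\in\{0,1,2,\dots\}$, and let $\beta=1-(1-p_s)(1-p_g)$. If $\Delta_T\in\{0,1\}$, the steady-state probabilities of the VAoI are the same as under the randomized stationary policy with transmission probability $1$, namely $\mu_0=\frac{p_s(1-p_g)}{\beta}$, $\mu_1=\frac{p_sp_g}{\beta^2}$, and $\mu_n=\left[\frac{(1-p_s)p_g}{\beta}\right]^{n-1}\mu_1$ for $n\ge2$. If $\Delta_T\ge2$, \[ \mu_n=\begin{cases}\dfrac{p_s(1-p_g)}{(\Delta_T-1)p_s+\beta}, & n=0,\\[2mm] \dfrac{p_s}{(\Delta_T-1)p_s+\beta}, & 1\le n\le\Delta_T-1,\\[2mm] \dfrac{p_g}{\beta}\mu_{\Delta_T-1}, & n=\Delta_T,\\[2mm] \left[\dfrac{(1-p_s)p_g}{\beta}\right]^{n-\Delta_T}\mu_{\Delta_T}, & n\ge\Delta_T+1.\end{cases} \]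
   Context: Time is slotted, $t\in\{0,1,2,\dots\}$. An information source generates a new version in each slot independently with probability $p_g$; let $G_t\in\{0,1\}$ indicate whether a new version is generated in slot $t$. A transmitter holding the current source version may, in each slot $t$, attempt to send it to a receiver over an erasure channel; $a(t)\in\{0,1\}$ indicates an attempt, and each attempt succeeds independently with probability $p_s$. The Version Age of Information (VAoI) $\Delta(t)$ (number of versions by which the receiver lags the source) evolves as $\Delta(t+1)=G_t$ if $a(t)=1$ and the attempt succeeds, and $\Delta(t+1)=\Delta(t)+G_t$ otherwise. All version-generation and channel events are mutually independent. Assume $0<p_s<1$, $0<p_g<1$. The threshold policy with threshold $\Delta_T$ sets $a(t)=1$ if $\Delta(t)\ge\Delta_T$ and $a(t)=0$ otherwise; $\Delta(t)$ is then an ergodic Markov chain and $\mu_n$ is its stationary probability of state $n$. *)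

theory Defs
  imports Complex_Main
begin

text \<open>One-slot dynamics: attempt a, channel outcome s (success), generation g.\<close>
definition vaoi_next :: "bool \<Rightarrow> bool \<Rightarrow> nat \<Rightarrow> nat \<Rightarrow> nat" where
  "vaoi_next a s g n = (if a \<and> s then g else n + g)"

definition threshold_action :: "nat \<Rightarrow> nat \<Rightarrow> bool" where
  "threshold_action DT n = (DT \<le> n)"

definition vaoi_trans :: "real \<Rightarrow> real \<Rightarrow> nat \<Rightarrow> nat \<Rightarrow> nat \<Rightarrow> real" where
  "vaoi_trans ps pg DT n m =
     (\<Sum>s\<in>{True, False}. \<Sum>g\<in>{0::nat, 1}.
        (if s then ps else 1 - ps) * (if g = 1 then pg else 1 - pg) *
        (if vaoi_next (threshold_action DT n) s g n = m then 1 else 0))"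

definition is_stationary :: "real \<Rightarrow> real \<Rightarrow> nat \<Rightarrow> (nat \<Rightarrow> real) \<Rightarrow> bool" where
  "is_stationary ps pg DT \<mu> \<longleftrightarrow>
     (\<forall>n. 0 \<le> \<mu> n) \<and> \<mu> sums 1 \<and>
     (\<forall>m. (\<lambda>n. \<mu> n * vaoi_trans ps pg DT n m) sums \<mu> m)"

end

theory Submission imports Defs begin

lemma trans_eq: "vaoi_trans ps pg DT n m =
  (if DT \<le> n then (if m = 0 then ps*(1-pg) else 0) + (if m = 1 then ps*pg else 0)
      + (if m = n then (1-ps)*(1-pg) else 0) + (if m = Suc n then (1-ps)*pg else 0)
   else (if m = n then 1-pg else 0) + (if m = Suc n then pg else 0))"
  unfolding vaoi_trans_def vaoi_next_def threshold_action_def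
  by (auto simp: algebra_simps)

lemma trans01: "vaoi_trans ps pg 0 = vaoi_trans ps pg 1"
  apply (rule ext)+ apply (simp only: trans_eq) by (auto simp: algebra_simps)

lemma tail_sums: fixes \<mu> :: "nat \<Rightarrow> real" assumes "\<mu> sums 1"
  shows "(\<lambda>n. if DT \<le> n then \<mu> n else 0) sums (1 - (\<Sum>n<DT. \<mu> n))"
proof -
  have "(\<lambda>n. if n \<in> {..<DT} then \<mu> n else 0) sums (\<Sum>n\<in>{..<DT}. \<mu> n)"
    by (rule sums_If_finite_set) simp
  then have "(\<lambda>n. if n < DT then \<mu> n else 0) sums (\<Sum>n<DT. \<mu> n)" by simp
  from sums_diff[OF assms this] show ?thesis
    by (rule back_subst[where P="\<lambda>f. f sums _"]) (auto simp: fun_eq_iff)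
qed

definition S :: "real \<Rightarrow> real \<Rightarrow> nat \<Rightarrow> (nat \<Rightarrow> real) \<Rightarrow> nat \<Rightarrow> real" where
 "S ps pg DT \<mu> m = ((if m=0 then ps*(1-pg) else 0) + (if m=1 then ps*pg else 0)) * (1 - (\<Sum>n<DT. \<mu> n))
   + \<mu> m * (if DT \<le> m then (1-ps)*(1-pg) else 1-pg)
   + (if m = 0 then 0 else \<mu> (m-1) * (if DT \<le> m-1 then (1-ps)*pg else pg))"

lemma bal_sums: assumes "\<mu> sums 1"
  shows "(\<lambda>n. \<mu> n * vaoi_trans ps pg DT n m) sums S ps pg DT \<mu> m"
proof -
  define Q where "Q n = (if DT \<le> n then (if m = n then (1-ps)*(1-pg) else 0) + (if m = Suc n then (1-ps)*pg else 0)
   else (if m = n then 1-pg else 0) + (if m = Suc n then pg else 0))" for n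
  define a where "a = (if m=0 then ps*(1-pg) else 0) + (if m=1 then ps*pg else 0)"
  have eq: "\<mu> n * vaoi_trans ps pg DT n m = a * (if DT \<le> n then \<mu> n else 0) + \<mu> n * Q n" for n
    unfolding trans_eq Q_def a_def by (auto simp: algebra_simps)
  have 1: "(\<lambda>n. a * (if DT \<le> n then \<mu> n else 0)) sums (a * (1 - (\<Sum>n<DT. \<mu> n)))"
    by (rule sums_mult[OF tail_sums[OF assms]])
  have 2: "(\<lambda>n. \<mu> n * Q n) sums (\<Sum>n\<in>{..m}. \<mu> n * Q n)"
    by (rule sums_finite) (auto simp: Q_def)
  have 3: "(\<Sum>n\<in>{..m}. \<mu> n * Q n) = \<mu> m * (if DT \<le> m then (1-ps)*(1-pg) else 1-pg)
   + (if m = 0 then 0 else \<mu> (m-1) * (if DT \<le> m-1 then (1-ps)*pg else pg))"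
  proof (cases m)
    case 0 then show ?thesis by (simp add: Q_def)
  next
    case (Suc k)
    have "(\<Sum>n\<in>{..m}. \<mu> n * Q n) = (\<Sum>n\<in>{..m}. (if n = m then \<mu> m * (if DT \<le> m then (1-ps)*(1-pg) else 1-pg) else 0)
        + (if n = k then \<mu> k * (if DT \<le> k then (1-ps)*pg else pg) else 0))"
      by (rule sum.cong) (auto simp: Q_def Suc)
    also have "\<dots> = \<mu> m * (if DT \<le> m then (1-ps)*(1-pg) else 1-pg) + \<mu> k * (if DT \<le> k then (1-ps)*pg else pg)"
      by (simp add: sum.distrib Suc)
    finally show ?thesis by (simp add: Suc)
  qed
  have "(\<lambda>n. \<mu> n * vaoi_trans ps pg DT n m) = (\<lambda>n. a * (if DT \<le> n then \<mu> n else 0) + \<mu> n * Q n)"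
    using eq by auto
  then have "(\<lambda>n. \<mu> n * vaoi_trans ps pg DT n m) sums (a * (1 - (\<Sum>n<DT. \<mu> n)) + (\<Sum>n\<in>{..m}. \<mu> n * Q n))"
    using sums_add[OF 1 2] by simp
  then show ?thesis unfolding S_def 3 a_def by (simp add: algebra_simps)
qed


lemma stat_iff:
  "is_stationary ps pg DT \<mu> \<longleftrightarrow> (\<forall>n. 0 \<le> \<mu> n) \<and> \<mu> sums 1 \<and> (\<forall>m. \<mu> m = S ps pg DT \<mu> m)"
proof
  assume H: "is_stationary ps pg DT \<mu>"
  then have s1: "\<mu> sums 1" and nn: "\<forall>n. 0 \<le> \<mu> n" 
    and b: "\<And>m. (\<lambda>n. \<mu> n * vaoi_trans ps pg DT n m) sums \<mu> m" unfolding is_stationary_def by auto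
  have "\<mu> m = S ps pg DT \<mu> m" for m
    by (rule sums_unique2[OF b bal_sums[OF s1]])
  with s1 nn show "(\<forall>n. 0 \<le> \<mu> n) \<and> \<mu> sums 1 \<and> (\<forall>m. \<mu> m = S ps pg DT \<mu> m)" by blast
next
  assume H: "(\<forall>n. 0 \<le> \<mu> n) \<and> \<mu> sums 1 \<and> (\<forall>m. \<mu> m = S ps pg DT \<mu> m)"
  have "(\<lambda>n. \<mu> n * vaoi_trans ps pg DT n m) sums \<mu> m" for m
  proof -
    have "\<mu> sums 1" using H by (elim conjE)
    from bal_sums[OF this, of ps pg DT m] have "(\<lambda>n. \<mu> n * vaoi_trans ps pg DT n m) sums S ps pg DT \<mu> m" .
    moreover have "S ps pg DT \<mu> m = \<mu> m" using H by (elim conjE) (rule sym, erule spec)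
    ultimately show ?thesis by (rule back_subst[where P="\<lambda>x. _ sums x"])
  qed
  moreover have "\<forall>n. 0 \<le> \<mu> n" "\<mu> sums 1" using H by blast+
  ultimately show "is_stationary ps pg DT \<mu>" unfolding is_stationary_def by blast
qed

lemma sum_init: fixes \<mu> :: "nat \<Rightarrow> real"
  assumes "\<And>n. 1 \<le> n \<Longrightarrow> n < DT \<Longrightarrow> \<mu> n = \<mu> 1" "1 \<le> DT"
  shows "(\<Sum>n<DT. \<mu> n) = \<mu> 0 + (real DT - 1) * \<mu> 1"
proof -
  obtain k where k: "DT = Suc k" using assms(2) by (cases DT) auto
  have "(\<Sum>n<DT. \<mu> n) = \<mu> 0 + (\<Sum>i<k. \<mu> (Suc i))"
    unfolding k sum.lessThan_Suc_shift by simp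
  also have "(\<Sum>i<k. \<mu> (Suc i)) = (\<Sum>i<k. \<mu> 1)"
  proof (rule sum.cong)
    fix i assume "i \<in> {..<k}" then show "\<mu> (Suc i) = \<mu> 1" by (intro assms(1)) (auto simp: k)
  qed simp
  finally show ?thesis by (simp add: k)
qed


lemma canc2: "(a::real) * x = a * y \<Longrightarrow> a \<noteq> 0 \<Longrightarrow> x = y" by simp

lemma fwd:
  fixes \<mu> :: "nat \<Rightarrow> real"
  assumes p: "0 < ps" "ps < 1" "0 < pg" "pg < 1" and DT1: "1 \<le> DT"
    and E: "\<And>m. \<mu> m = S ps pg DT \<mu> m"
  defines "\<beta> \<equiv> 1 - (1-ps)*(1-pg)"
  defines "c \<equiv> ps / ((real DT - 1)*ps + \<beta>)" and "r \<equiv> (1-ps)*pg/\<beta>"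
  shows "\<mu> n = (if n=0 then (1-pg)*c else if n<DT then c else r^(n-DT)*(pg/\<beta>*c))"
proof -
  have bpos: "\<beta> > 0" unfolding \<beta>_def using p by (simp add: algebra_simps) (smt (verit) mult_pos_pos mult_less_cancel_right1)
  define D where "D = (real DT - 1)*ps + \<beta>"
  have Dpos: "D > 0" unfolding D_def using DT1 bpos p by (simp add: add_nonneg_pos)
  have cD: "c * D = ps" unfolding c_def D_def[symmetric] using Dpos by simp
  have bq: "\<beta> * (pg/\<beta>*c) = pg*c" using bpos by simp
  have br: "\<beta> * r = (1-ps)*pg" unfolding r_def using bpos by simp
  have step: "1 \<le> n \<Longrightarrow> n < DT \<Longrightarrow> \<mu> n = \<mu> 1" for n
  proof (induction n)
    case 0 then show ?case by simp
  next
    case (Suc k)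
    show ?case
    proof (cases "k = 0")
      case True then show ?thesis by simp
    next
      case False
      have e: "\<mu> (Suc k) = \<mu> (Suc k)*(1-pg) + \<mu> k * pg"
        by (rule trans[OF E]) (use False Suc.prems in \<open>simp add: S_def\<close>)
      have "pg * \<mu> (Suc k) = pg * \<mu> k" using e by algebra
      then have "\<mu> (Suc k) = \<mu> k" using p by simp
      with Suc False show ?thesis by simp
    qed
  qed
  have A: "(\<Sum>n<DT. \<mu> n) = \<mu> 0 + (real DT - 1) * \<mu> 1"
    by (rule sum_init[where \<mu>=\<mu>, OF step DT1])
  have E0: "\<mu> 0 = ps*(1-pg)*(1 - (\<mu> 0 + (real DT - 1) * \<mu> 1)) + \<mu> 0 * (1-pg)"
    by (rule trans[OF E]) (use DT1 in \<open>simp add: S_def A\<close>)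
  have v01: "\<mu> 0 = (1-pg)*c \<and> \<mu> 1 = (if DT = 1 then pg/\<beta>*c else c)"
  proof (cases "DT = 1")
    case True
    have E1: "\<mu> 1 = ps*pg*(1 - (\<mu> 0 + (real DT - 1) * \<mu> 1)) + \<mu> 1 * ((1-ps)*(1-pg)) + \<mu> 0 * pg"
      by (rule trans[OF E]) (use True in \<open>simp add: S_def A\<close>)
    have rD: "real DT = 1" using True by simp
    have "\<beta> * \<mu> 0 = \<beta> * ((1-pg)*c)" using E0 cD rD unfolding D_def \<beta>_def by algebra
    then have h0: "\<mu> 0 = (1-pg)*c" by (rule canc2) (use bpos in simp)
    have "\<beta> * \<mu> 1 = \<beta> * (pg/\<beta>*c)" unfolding bq using E1 h0 cD rD unfolding D_def \<beta>_def by algebra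
    then have "\<mu> 1 = pg/\<beta>*c" by (rule canc2) (use bpos in simp)
    with h0 True show ?thesis by simp
  next
    case False
    have E1: "\<mu> 1 = ps*pg*(1 - (\<mu> 0 + (real DT - 1) * \<mu> 1)) + \<mu> 1 * (1-pg) + \<mu> 0 * pg"
      by (rule trans[OF E]) (use False DT1 in \<open>simp add: S_def A\<close>)
    define T where "T = 1 - (\<mu> 0 + (real DT - 1) * \<mu> 1)"
    have "pg * \<mu> 1 = pg * (ps * T + \<mu> 0)" using E1 unfolding T_def by algebra
    then have h2: "\<mu> 1 = ps * T + \<mu> 0" using p by simp
    have h0: "\<mu> 0 = (1-pg) * \<mu> 1" using E0 h2 unfolding T_def by algebra
    have "(1-pg) * (\<mu> 1 * D) = (1-pg) * ps" using E0 h0 unfolding D_def \<beta>_def by algebra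
    then have "\<mu> 1 * D = ps" using p by simp
    then have "D * \<mu> 1 = D * c" using cD by (simp add: algebra_simps)
    then have h1: "\<mu> 1 = c" using Dpos by simp
    with h0 False show ?thesis by simp
  qed
  have vDT: "\<mu> DT = pg/\<beta>*c"
  proof (cases "DT = 1")
    case True then show ?thesis using v01 by simp
  next
    case False
    have nle: "\<not> DT \<le> DT - 1" using DT1 by simp
    have e: "\<mu> DT = \<mu> DT * ((1-ps)*(1-pg)) + \<mu> (DT - 1) * pg"
      by (rule trans[OF E]) (use DT1 False nle in \<open>simp add: S_def not_le[symmetric]\<close>)
    have "\<mu> (DT - 1) = c" using step[of "DT - 1"] DT1 False v01 by simp
    with e have "\<beta> * \<mu> DT = \<beta> * (pg/\<beta>*c)" unfolding bq unfolding \<beta>_def by algebra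
    then show ?thesis by (rule canc2) (use bpos in simp)
  qed
  have geo: "\<mu> (DT + k) = r^k * (pg/\<beta>*c)" for k
  proof (induction k)
    case 0 then show ?case using vDT by simp
  next
    case (Suc k)
    have e: "\<mu> (DT + Suc k) = \<mu> (DT + Suc k) * ((1-ps)*(1-pg)) + \<mu> (DT + k) * ((1-ps)*pg)"
      by (rule trans[OF E]) (use DT1 in \<open>simp add: S_def\<close>)
    have "\<beta> * \<mu> (DT + Suc k) = \<beta> * (r * \<mu> (DT + k))" using e br unfolding \<beta>_def by algebra
    then have "\<mu> (DT + Suc k) = r * \<mu> (DT + k)" by (rule canc2) (use bpos in simp)
    then show ?case using Suc by simp
  qed
  show ?thesis
  proof (cases "n < DT")
    case True
    then show ?thesis using v01 step[of n] by auto
  next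
    case False
    then show ?thesis using geo[of "n - DT"] DT1 by simp
  qed
qed


lemma bwd:
  fixes \<mu> :: "nat \<Rightarrow> real"
  assumes p: "0 < ps" "ps < 1" "0 < pg" "pg < 1" and DT1: "1 \<le> DT"
  defines "\<beta> \<equiv> 1 - (1-ps)*(1-pg)"
  defines "c \<equiv> ps / ((real DT - 1)*ps + \<beta>)" and "r \<equiv> (1-ps)*pg/\<beta>"
  assumes F: "\<And>n. \<mu> n = (if n=0 then (1-pg)*c else if n<DT then c else r^(n-DT)*(pg/\<beta>*c))"
  shows "(\<forall>n. 0 \<le> \<mu> n) \<and> \<mu> sums 1 \<and> (\<forall>m. \<mu> m = S ps pg DT \<mu> m)"
proof -
  have bpos: "\<beta> > 0" unfolding \<beta>_def using p by (simp add: algebra_simps) (smt (verit) mult_pos_pos mult_less_cancel_right1)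
  define D where "D = (real DT - 1)*ps + \<beta>"
  have Dpos: "D > 0" unfolding D_def using DT1 bpos p by (simp add: add_nonneg_pos)
  have cD: "c * D = ps" unfolding c_def D_def[symmetric] using Dpos by simp
  have cpos: "c > 0" unfolding c_def D_def[symmetric] using Dpos p by simp
  define K where "K = pg/\<beta>*c"
  have bq: "\<beta> * K = pg*c" unfolding K_def using bpos by simp
  have Kpos: "K > 0" unfolding K_def using bpos cpos p by simp
  have br: "\<beta> * r = (1-ps)*pg" unfolding r_def using bpos by simp
  have rpos: "r > 0" unfolding r_def using bpos p by simp
  have r1: "\<beta> * (1 - r) = ps" using br unfolding \<beta>_def by algebra
  have "\<beta> * (1 - r) > 0" using r1 p by simp
  then have rlt: "r < 1" using bpos by (simp add: zero_less_mult_iff)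
  have F0: "\<mu> 0 = (1-pg)*c" using F by simp
  have Fc: "1 \<le> n \<Longrightarrow> n < DT \<Longrightarrow> \<mu> n = c" for n using F by simp
  have FK: "DT \<le> n \<Longrightarrow> \<mu> n = r^(n-DT)*K" for n using F DT1 unfolding K_def by auto
  have step: "1 \<le> n \<Longrightarrow> n < DT \<Longrightarrow> \<mu> n = \<mu> 1" for n using F by simp
  have A0: "(\<Sum>n<DT. \<mu> n) = \<mu> 0 + (real DT - 1) * \<mu> 1"
    by (rule sum_init[where \<mu>=\<mu>, OF step DT1])
  have m1: "(real DT - 1) * \<mu> 1 = (real DT - 1) * c"
    using Fc[of 1] DT1 by (cases "DT = 1") auto
  have A: "(\<Sum>n<DT. \<mu> n) = (1-pg)*c + (real DT - 1) * c" unfolding A0 m1 F0 ..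
  have nn: "\<forall>n. 0 \<le> \<mu> n"
    using F cpos Kpos rpos p unfolding K_def[symmetric] by (simp add: less_imp_le)
  have "(\<lambda>i. \<mu> (i + DT)) = (\<lambda>i. r^i * K)" using FK by auto
  moreover have "(\<lambda>i. r^i * K) sums (1/(1-r) * K)"
    by (rule sums_mult2, rule geometric_sums) (use rpos rlt in simp)
  ultimately have "(\<lambda>i. \<mu> (i + DT)) sums (1/(1-r) * K)" by simp
  then have "\<mu> sums (1/(1-r) * K + (\<Sum>i<DT. \<mu> i))" by (simp add: sums_iff_shift)
  moreover have "1/(1-r) * K + (\<Sum>i<DT. \<mu> i) = 1"
  proof -
    have e1: "1 - r = ps/\<beta>" using r1 bpos by (simp add: eq_divide_eq mult.commute)
    have "1/(1-r) * K = \<beta> * K / ps" unfolding e1 by simp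
    then have "1/(1-r) * K = pg * c / ps" unfolding bq .
    moreover have "ps * (pg * c / ps) = pg * c" using p by simp
    ultimately have "ps * (1/(1-r) * K + (\<Sum>i<DT. \<mu> i)) = ps * 1" unfolding A using cD unfolding D_def \<beta>_def by algebra
    then show ?thesis by (rule canc2) (use p in simp)
  qed
  ultimately have s1: "\<mu> sums 1" by simp
  have bal: "\<mu> m = S ps pg DT \<mu> m" for m
  proof -
    consider "m = 0" | "m = 1" | "2 \<le> m" "m < DT" | "2 \<le> m" "m = DT" | "2 \<le> m" "DT < m" by linarith
    then show ?thesis
    proof cases
      case 1
      have "S ps pg DT \<mu> m = ps*(1-pg)*(1 - ((1-pg)*c + (real DT - 1) * c)) + \<mu> 0 * (1-pg)"
        using 1 DT1 by (simp add: S_def A F0)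
      then show ?thesis using F0 cD unfolding 1 D_def \<beta>_def by algebra
    next
      case 2
      show ?thesis
      proof (cases "DT = 1")
        case True
        have "S ps pg DT \<mu> m = ps*pg*(1 - ((1-pg)*c + (real DT - 1) * c)) + \<mu> 1 * ((1-ps)*(1-pg)) + \<mu> 0 * pg"
          using 2 True by (simp add: S_def A F0)
        moreover have "\<mu> 1 = K" using FK[of 1] True by simp
        moreover have "real DT = 1" using True by simp
        ultimately have "\<beta> * \<mu> m = \<beta> * S ps pg DT \<mu> m" using F0 cD bq unfolding 2 D_def \<beta>_def by algebra
        then show ?thesis by (rule canc2) (use bpos in simp)
      next
        case False
        have "S ps pg DT \<mu> m = ps*pg*(1 - ((1-pg)*c + (real DT - 1) * c)) + \<mu> 1 * (1-pg) + \<mu> 0 * pg"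
          using 2 False DT1 by (simp add: S_def A F0)
        moreover have "\<mu> 1 = c" using Fc[of 1] False DT1 by simp
        ultimately show ?thesis using F0 cD unfolding 2 D_def \<beta>_def by algebra
      qed
    next
      case 3
      have "S ps pg DT \<mu> m = \<mu> m * (1-pg) + \<mu> (m-1) * pg"
        using 3 \<open>2 \<le> m\<close> by (simp add: S_def not_le[symmetric] le_diff_conv2)
      moreover have "\<mu> m = c" "\<mu> (m-1) = c" using Fc[of m] Fc[of "m-1"] 3 by auto
      ultimately show ?thesis by (simp add: algebra_simps)
    next
      case 4
      have "\<not> DT \<le> DT - Suc 0" using DT1 by arith
      have "S ps pg DT \<mu> m = \<mu> m * ((1-ps)*(1-pg)) + \<mu> (m-1) * pg"
        using 4 DT1 \<open>\<not> DT \<le> DT - Suc 0\<close> by (simp add: S_def)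
      moreover have "\<mu> m = K" "\<mu> (m-1) = c" using FK[of m] Fc[of "m-1"] 4 by auto
      ultimately show ?thesis using bq unfolding \<beta>_def by algebra
    next
      case 5
      have "S ps pg DT \<mu> m = \<mu> m * ((1-ps)*(1-pg)) + \<mu> (m-1) * ((1-ps)*pg)"
        using 5 by (simp add: S_def le_diff_conv2)
      moreover obtain j where j: "m - DT = Suc j" using 5 by (cases "m - DT") auto
      have jj: "m - 1 - DT = j" using j by auto
      have "\<mu> (m-1) = r^(m-1-DT) * K" by (rule FK) (use 5 in arith)
      then have "\<mu> (m-1) = r^j * K" unfolding jj .
      moreover have "\<mu> m = r^(Suc j) * K" using FK[of m] 5 j by simp
      moreover have "\<beta> * (r * x) = \<beta> * (r * x * ((1-ps)*(1-pg)) + x * ((1-ps)*pg))" for x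
        using br unfolding \<beta>_def by algebra
      ultimately have "\<beta> * \<mu> m = \<beta> * S ps pg DT \<mu> m" by (simp only: power_Suc mult.assoc)
      then show ?thesis by (rule canc2) (use bpos in simp)
    qed
  qed
  show ?thesis using nn s1 bal by blast
qed


lemma char:
  fixes \<mu> :: "nat \<Rightarrow> real"
  assumes p: "0 < ps" "ps < 1" "0 < pg" "pg < 1" and DT1: "1 \<le> DT"
  shows "is_stationary ps pg DT \<mu> \<longleftrightarrow> (\<forall>n. \<mu> n = (if n=0 then (1-pg)*(ps / ((real DT - 1)*ps + (1 - (1-ps)*(1-pg))))
     else if n<DT then ps / ((real DT - 1)*ps + (1 - (1-ps)*(1-pg)))
     else ((1-ps)*pg/(1 - (1-ps)*(1-pg)))^(n-DT)*(pg/(1 - (1-ps)*(1-pg))*(ps / ((real DT - 1)*ps + (1 - (1-ps)*(1-pg)))))))"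
  (is "_ \<longleftrightarrow> (\<forall>n. \<mu> n = ?G n)")
proof
  assume "is_stationary ps pg DT \<mu>"
  then have E: "\<And>m. \<mu> m = S ps pg DT \<mu> m" unfolding stat_iff by blast
  show "\<forall>n. \<mu> n = ?G n" using fwd[OF p DT1 E] by blast
next
  assume "\<forall>n. \<mu> n = ?G n"
  then have F: "\<And>n. \<mu> n = ?G n" by blast
  show "is_stationary ps pg DT \<mu>" unfolding stat_iff using bwd[OF p DT1 F] .
qed

lemma stat01: "is_stationary ps pg 0 \<mu> = is_stationary ps pg 1 \<mu>"
  unfolding is_stationary_def trans01 ..

theorem proposition3:
  fixes ps pg :: real and DT :: nat and \<mu> :: "nat \<Rightarrow> real"
  assumes "0 < ps" "ps < 1" "0 < pg" "pg < 1"
  defines "\<beta> \<equiv> 1 - (1 - ps) * (1 - pg)"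
  shows "is_stationary ps pg DT \<mu> \<longleftrightarrow>
    (if DT \<le> 1 then
       (\<forall>n. \<mu> n = (if n = 0 then ps * (1 - pg) / \<beta>
                   else if n = 1 then ps * pg / \<beta>\<^sup>2
                   else ((1 - ps) * pg / \<beta>) ^ (n - 1) * (ps * pg / \<beta>\<^sup>2)))
     else
       (\<forall>n. \<mu> n = (if n = 0 then ps * (1 - pg) / ((real DT - 1) * ps + \<beta>)
                   else if n \<le> DT - 1 then ps / ((real DT - 1) * ps + \<beta>)
                   else if n = DT then pg / \<beta> * (ps / ((real DT - 1) * ps + \<beta>))
                   else ((1 - ps) * pg / \<beta>) ^ (n - DT) *
                          (pg / \<beta> * (ps / ((real DT - 1) * ps + \<beta>))))))"
proof -
  have bpos: "\<beta> > 0" unfolding \<beta>_def using assms(1-4) by (simp add: algebra_simps) (smt (verit) mult_pos_pos mult_less_cancel_right1)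
  show ?thesis
  proof (cases "DT \<le> 1")
  case True
  have st: "is_stationary ps pg DT \<mu> = is_stationary ps pg 1 \<mu>"
    using True stat01 by (cases DT) auto
  have key: "(if n=0 then (1-pg)*(ps / ((real (1::nat) - 1)*ps + \<beta>))
     else if n<1 then ps / ((real (1::nat) - 1)*ps + \<beta>)
     else ((1-ps)*pg/\<beta>)^(n-1)*(pg/\<beta>*(ps / ((real (1::nat) - 1)*ps + \<beta>))))
   = (if n = 0 then ps * (1 - pg) / \<beta>
                   else if n = 1 then ps * pg / \<beta>\<^sup>2
                   else ((1 - ps) * pg / \<beta>) ^ (n - 1) * (ps * pg / \<beta>\<^sup>2))" for n
    using bpos by (simp add: power2_eq_square)
  show ?thesis
    unfolding st char[OF assms(1-4) order_refl] \<beta>_def[symmetric] key using True by simp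
next
  case False
  have key: "(if n=0 then (1-pg)*(ps / ((real DT - 1)*ps + \<beta>))
     else if n<DT then ps / ((real DT - 1)*ps + \<beta>)
     else ((1-ps)*pg/\<beta>)^(n-DT)*(pg/\<beta>*(ps / ((real DT - 1)*ps + \<beta>))))
   = (if n = 0 then ps * (1 - pg) / ((real DT - 1) * ps + \<beta>)
                   else if n \<le> DT - 1 then ps / ((real DT - 1) * ps + \<beta>)
                   else if n = DT then pg / \<beta> * (ps / ((real DT - 1) * ps + \<beta>))
                   else ((1 - ps) * pg / \<beta>) ^ (n - DT) *
                          (pg / \<beta> * (ps / ((real DT - 1) * ps + \<beta>))))" for n
    using False by auto
  have DT1: "1 \<le> DT" using False by simp
  show ?thesis
    unfolding char[OF assms(1-4) DT1] \<beta>_def[symmetric] key using False by simp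
  qed
qed

end
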